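(* The automorphism group $\Gamma(C)$ of the cyclic order relation $C$ on $\mathbb Q\times\mathbb Z$ consists exactly of the positive permutations belonging to $\Gamma(S)$, i.e. of all positive permutations of $\mathbb Q\times\mathbb Z$ that initiate a permutation of $\mathbb Q$ of rotation type.
   Context: $\mathbb Q\times\mathbb Z$ denotes the set $\mathbb Q\times\mathbb Z$ with the lexicographic order: $(r,z)<(r',z')$ iff $r<r'$, or $r=r'$ and $z<z'$. On $\mathbb Q\times\mathbb Z$: $C(a,b,c)\iff(a<b<c)\vee(b<c<a)\vee(c<a<b)$, $B(a,b,c)\iff(a<b<c)\vee(a>b>c)$, $S(a,b,c,d)\iff(B(a,b,c)\vee B(a,d,c))\wedge(B(b,a,d)\vee B(b,c,d))$; $\Gamma(R)$ is the group of permutations of $\mathbb Q\times\mathbb Z$ preserving $R$. A vertical is a set $\{r\}\times\mathbb Z$. A permutation $g$ is systemic if it maps every vertical onto a vertical; it initiates the permutation $h$ of $\mathbb Q$ with $g(\{a\}\times\mathbb Z)=\{h(a)\}\times\mathbb Z$. A systemic permutation is positive if it preserves the order on each vertical. A section of $\mathbb Q$ is a pair $\{I_1,I_2\}$ with $I_1\cup I_2=\mathbb Q$, $I_1\cap I_2=\emptyset$, and $a<b$ for all $a\in I_1,b\in I_2$ (one of them may be empty). A permutation $h$ of $\mathbb Q$ is of rotation type if for some section $\{I_1,I_2\}$, $h$ is increasing on $I_1$ and on $I_2$ and $h(a)>h(b)$ for all $a\in I_1$, $b\in I_2$. *)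

theory Defs
  imports Complex_Main
begin

type_synonym pt = "rat \<times> int"

definition lex_less :: "pt \<Rightarrow> pt \<Rightarrow> bool" where
  "lex_less p q \<longleftrightarrow> fst p < fst q \<or> (fst p = fst q \<and> snd p < snd q)"

definition relC :: "pt \<Rightarrow> pt \<Rightarrow> pt \<Rightarrow> bool" where
  "relC a b c \<longleftrightarrow> (lex_less a b \<and> lex_less b c) \<or> (lex_less b c \<and> lex_less c a)
                   \<or> (lex_less c a \<and> lex_less a b)"

definition relB :: "pt \<Rightarrow> pt \<Rightarrow> pt \<Rightarrow> bool" where
  "relB a b c \<longleftrightarrow> (lex_less a b \<and> lex_less b c) \<or> (lex_less b a \<and> lex_less c b)"

definition relS :: "pt \<Rightarrow> pt \<Rightarrow> pt \<Rightarrow> pt \<Rightarrow> bool" where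
  "relS a b c d \<longleftrightarrow> (relB a b c \<or> relB a d c) \<and> (relB b a d \<or> relB b c d)"

definition Gamma3 :: "(pt \<Rightarrow> pt \<Rightarrow> pt \<Rightarrow> bool) \<Rightarrow> (pt \<Rightarrow> pt) set" where
  "Gamma3 R = {g. bij g \<and> (\<forall>a b c. R a b c \<longleftrightarrow> R (g a) (g b) (g c))}"

definition Gamma4 :: "(pt \<Rightarrow> pt \<Rightarrow> pt \<Rightarrow> pt \<Rightarrow> bool) \<Rightarrow> (pt \<Rightarrow> pt) set" where
  "Gamma4 R = {g. bij g \<and> (\<forall>a b c d. R a b c d \<longleftrightarrow> R (g a) (g b) (g c) (g d))}"

definition vertical :: "rat \<Rightarrow> pt set" where
  "vertical r = {r} \<times> UNIV"

definition systemic :: "(pt \<Rightarrow> pt) \<Rightarrow> bool" where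
  "systemic g \<longleftrightarrow> bij g \<and> (\<forall>r. \<exists>r'. g ` vertical r = vertical r')"

definition initiates :: "(pt \<Rightarrow> pt) \<Rightarrow> (rat \<Rightarrow> rat) \<Rightarrow> bool" where
  "initiates g h \<longleftrightarrow> systemic g \<and> (\<forall>a. g ` vertical a = vertical (h a))"

definition positive :: "(pt \<Rightarrow> pt) \<Rightarrow> bool" where
  "positive g \<longleftrightarrow> systemic g \<and>
     (\<forall>p q. fst p = fst q \<longrightarrow> lex_less p q \<longrightarrow> lex_less (g p) (g q))"

definition is_section :: "rat set \<Rightarrow> rat set \<Rightarrow> bool" where
  "is_section I1 I2 \<longleftrightarrow> I1 \<union> I2 = UNIV \<and> I1 \<inter> I2 = {} \<and> (\<forall>a\<in>I1. \<forall>b\<in>I2. a < b)"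

definition rotation_type :: "(rat \<Rightarrow> rat) \<Rightarrow> bool" where
  "rotation_type h \<longleftrightarrow> bij h \<and> (\<exists>I1 I2. is_section I1 I2 \<and> strict_mono_on I1 h \<and>
     strict_mono_on I2 h \<and> (\<forall>a\<in>I1. \<forall>b\<in>I2. h a > h b))"

end

theory Submission imports Defs "HOL-Library.Product_Lexorder" begin

lemma ll: "lex_less p q \<longleftrightarrow> p < q" by (cases p; cases q) (auto simp: lex_less_def)

definition CC :: "'a::linorder \<Rightarrow> 'a \<Rightarrow> 'a \<Rightarrow> bool" where
 "CC a b c \<longleftrightarrow> (a<b \<and> b<c) \<or> (b<c \<and> c<a) \<or> (c<a \<and> a<b)"

lemma fst_less: "fst p \<noteq> fst q \<Longrightarrow> (p < q \<longleftrightarrow> fst p < fst q)"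
  for p q :: pt by (cases p; cases q) auto

lemma succ_char: "(p \<noteq> q \<and> (\<forall>x. \<not> CC p x q)) \<longleftrightarrow> q = (fst p, snd p + 1)" for p q :: pt
proof
  assume h: "p \<noteq> q \<and> (\<forall>x. \<not> CC p x q)"
  show "q = (fst p, snd p + 1)"
  proof (cases "q < p")
    case True
    have "CC p (fst p + 1, 0) q" using True by (cases p) (auto simp: CC_def)
    with h show ?thesis by blast
  next
    case False
    with h have pq: "p < q" by auto
    show ?thesis
    proof (rule ccontr)
      assume ne: "q \<noteq> (fst p, snd p + 1)"
      have "CC p (fst p, snd p + 1) q" using pq ne
        by (cases p; cases q) (auto simp: CC_def)
      with h show False by blast
    qed
  qed
next
  assume "q = (fst p, snd p + 1)"
  then show "p \<noteq> q \<and> (\<forall>x. \<not> CC p x q)"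
    by (cases p) (auto simp: CC_def)
qed

lemma part1:
  fixes g :: "pt \<Rightarrow> pt"
  assumes bg: "bij g" and pres: "\<And>a b c. CC a b c \<longleftrightarrow> CC (g a) (g b) (g c)"
  shows "positive g \<and> (\<exists>h. initiates g h \<and> rotation_type h)"
proof -
  have ig: "inj g" and sg: "surj g" using bg bij_is_inj bij_is_surj by auto
  have gs: "g (fst p, snd p + 1) = (fst (g p), snd (g p) + 1)" for p
  proof -
    have "p \<noteq> (fst p, snd p + 1) \<and> (\<forall>x. \<not> CC p x (fst p, snd p + 1))"
      using succ_char by blast
    hence "g p \<noteq> g (fst p, snd p + 1) \<and> (\<forall>x. \<not> CC (g p) x (g (fst p, snd p + 1)))"
    proof (intro conjI allI)
      fix x
      assume a: "p \<noteq> (fst p, snd p + 1) \<and> (\<forall>x. \<not> CC p x (fst p, snd p + 1))"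
      obtain y where xy: "x = g y" using sg by (metis surjD)
      have "\<not> CC p y (fst p, snd p + 1)" using a by (elim conjE allE)
      thus "\<not> CC (g p) x (g (fst p, snd p + 1))" using xy pres[of p y "(fst p, snd p + 1)"] by simp
    qed (simp add: inj_eq[OF ig])
    thus ?thesis using succ_char by blast
  qed
  define h where "h r = fst (g (r, 0))" for r
  define s where "s r = snd (g (r, 0))" for r
  have gv: "g (r, n) = (h r, s r + n)" for r n
  proof (induction n rule: int_induct[where k=0])
    case base then show ?case by (simp add: h_def s_def)
  next
    case (step1 i)
    then show ?case using gs[of "(r,i)"] by simp
  next
    case (step2 i)
    have "g (r, i) = (fst (g (r, i - 1)), snd (g (r, i - 1)) + 1)" using gs[of "(r,i - 1)"] by simp
    with step2 have "fst (g (r, i - 1)) = h r" "snd (g (r, i - 1)) + 1 = s r + i" by simp_all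
    then show ?case by (simp add: prod_eq_iff)
  qed
  have fstg: "fst (g p) = h (fst p)" for p using gv[of "fst p" "snd p"] by simp
  have img: "g ` vertical r = vertical (h r)" for r
  proof
    show "g ` vertical r \<subseteq> vertical (h r)" using gv by (auto simp: vertical_def)
    show "vertical (h r) \<subseteq> g ` vertical r"
    proof
      fix x assume "x \<in> vertical (h r)"
      then have "x = g (r, snd x - s r)" using gv by (cases x) (auto simp: vertical_def)
      thus "x \<in> g ` vertical r" by (auto simp: vertical_def)
    qed
  qed
  have sys: "systemic g" using bg img unfolding systemic_def by blast
  have ini: "initiates g h" using sys img unfolding initiates_def by blast
  have pos: "positive g"
    unfolding positive_def ll
  proof (intro conjI sys allI impI)
    fix p q :: pt assume "fst p = fst q" "p < q"
    moreover have "g p = (h (fst p), s (fst p) + snd p)" using gv[of "fst p" "snd p"] by simp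
    moreover have "g q = (h (fst q), s (fst q) + snd q)" using gv[of "fst q" "snd q"] by simp
    ultimately show "g p < g q" by (simp add: less_prod_def)
  qed
  have hinj: "inj h"
  proof (rule injI)
    fix a b assume "h a = h b"
    then have "g (a, 0) = g (b, s a - s b)" using gv by simp
    then show "a = b" by (simp add: inj_eq[OF ig])
  qed
  have hsurj: "surj h"
  proof -
    have "y \<in> range h" for y
    proof -
      obtain p where "g p = (y, 0)" using sg by (metis surjD)
      then have "h (fst p) = y" using fstg by (metis fst_conv)
      thus ?thesis by blast
    qed
    thus ?thesis by blast
  qed
  have hC: "CC (h x) (h y) (h z)" if "x < y" "y < z" for x y z
  proof -
    have "CC (x, 0::int) (y, 0) (z, 0)" using that by (simp add: CC_def less_prod_def)
    then have c: "CC (g (x,0)) (g (y,0)) (g (z,0))" using pres[of "(x,0)" "(y,0)" "(z,0)"] by simp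
    have d: "h x \<noteq> h y" "h y \<noteq> h z" "h x \<noteq> h z" using that by (simp_all add: inj_eq[OF hinj])
    have e: "g (u,0) < g (v,0) \<longleftrightarrow> h u < h v" if "h u \<noteq> h v" for u v
      using fst_less[of "g (u,0)" "g (v,0)"] that by (simp add: h_def)
    have "CC (g (x,0)) (g (y,0)) (g (z,0)) = CC (h x) (h y) (h z)"
      unfolding CC_def using d by (simp add: e)
    then show ?thesis using c by simp
  qed
  have hne: "h x \<noteq> h y" if "x \<noteq> y" for x y using that by (simp add: inj_eq[OF hinj])
  define I1 where "I1 = {x. \<exists>y>x. h y < h x}"
  define I2 where "I2 = - I1"
  have dc: "x' \<in> I1" if th: "x \<in> I1" "x' < x" for x x'
  proof -
    obtain y where y: "x < y" "h y < h x" using th I1_def by auto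
    show ?thesis
    proof (cases "h x < h x'")
      case True then show ?thesis using th I1_def by auto
    next
      case False
      then have "h x' < h x" using hne[of x' x] th by fastforce
      moreover have "CC (h x') (h x) (h y)" using hC th y by blast
      ultimately have "h y < h x'" using y unfolding CC_def by auto
      then show ?thesis using th y I1_def by auto
    qed
  qed
  have sec: "is_section I1 I2"
    unfolding is_section_def I2_def
  proof (intro conjI ballI)
    fix a b assume "a \<in> I1" "b \<in> - I1"
    then show "a < b" using dc by (metis ComplD linorder_neqE)
  qed auto
  have m2: "strict_mono_on I2 h"
  proof (rule strict_mono_onI)
    fix x y assume "x \<in> I2" "y \<in> I2" "x < y"
    hence "\<not> h y < h x" unfolding I2_def I1_def by auto
    then show "h x < h y" using hne[of x y] \<open>x < y\<close> by auto
  qed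
  have m1: "strict_mono_on I1 h"
  proof (rule strict_mono_onI)
    fix x y assume xy: "x \<in> I1" "y \<in> I1" "x < y"
    obtain z where z: "y < z" "h z < h y" using xy I1_def by auto
    have "CC (h x) (h y) (h z)" using hC xy z by blast
    then show "h x < h y" using z unfolding CC_def by auto
  qed
  have cr: "h b < h a" if th: "a \<in> I1" "b \<in> I2" for a b
  proof (rule ccontr)
    assume "\<not> h b < h a"
    then have ab: "h a < h b" using hne[of a b] th sec unfolding is_section_def by fastforce
    have "a < b" using th sec unfolding is_section_def by auto
    obtain y where y: "a < y" "h y < h a" using th I1_def by auto
    show False
    proof (cases y b rule: linorder_cases)
      case less
      have "CC (h a) (h y) (h b)" using hC y less by blast
      then show ?thesis using ab y unfolding CC_def by auto
    next
      case equal then show ?thesis using ab y by auto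
    next
      case greater
      have "h b < h y" using m2 th greater
      proof -
        have "b \<notin> I1" using th I2_def by auto
        hence "\<not> h y < h b" using greater I1_def by auto
        thus ?thesis using hne[of b y] greater by auto
      qed
      then show ?thesis using ab y by auto
    qed
  qed
  have "rotation_type h" unfolding rotation_type_def
    using hinj hsurj sec m1 m2 cr unfolding bij_def by blast
  then show ?thesis using pos ini by blast
qed


definition BB :: "'a::linorder \<Rightarrow> 'a \<Rightarrow> 'a \<Rightarrow> bool" where
 "BB a b c \<longleftrightarrow> (a<b \<and> b<c) \<or> (b<a \<and> c<b)"

lemma SS: fixes a b c d :: "'a::linorder"
  shows "((BB a b c \<or> BB a d c) \<and> (BB b a d \<or> BB b c d)) \<longleftrightarrow> distinct [a,b,c,d] \<and> (CC a b c \<noteq> CC a d c)"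
  unfolding BB_def CC_def
  by (cases a b rule: linorder_cases; cases a c rule: linorder_cases; cases a d rule: linorder_cases;
      cases b c rule: linorder_cases; cases b d rule: linorder_cases; cases c d rule: linorder_cases;
      (simp add: less_imp_not_less less_imp_neq[symmetric] less_imp_neq; order?)?; auto)

lemma rotC:
  fixes A :: "'a::linorder set"
  assumes dc: "\<And>x y. x \<in> A \<Longrightarrow> y < x \<Longrightarrow> y \<in> A"
  defines "r \<equiv> (\<lambda>x y. (x\<notin>A \<and> y\<in>A) \<or> ((x\<in>A \<longleftrightarrow> y\<in>A) \<and> x<y))"
  shows "(r a b \<and> r b c \<or> r b c \<and> r c a \<or> r c a \<and> r a b) = CC a b c"
  unfolding r_def CC_def
  by (cases "a\<in>A"; cases "b\<in>A"; cases "c\<in>A"; cases a b rule: linorder_cases; cases a c rule: linorder_cases;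
      cases b c rule: linorder_cases) (auto dest: dc)

lemma relC_CC: "relC a b c = CC a b c" by (simp add: relC_def CC_def ll)

lemma relS_iff: "relS a b c d \<longleftrightarrow> distinct [a,b,c,d] \<and> (CC a b c \<noteq> CC a d c)"
  using SS[of a b c d] by (simp add: relS_def relB_def BB_def ll)

lemma part2:
  fixes g :: "pt \<Rightarrow> pt"
  assumes pos: "positive g" and ini: "initiates g h" and rt: "rotation_type h"
  shows "CC a b c \<longleftrightarrow> CC (g a) (g b) (g c)"
proof -
  obtain I1 I2 where sec: "is_section I1 I2" and m1: "strict_mono_on I1 h" and m2: "strict_mono_on I2 h"
    and cr: "\<forall>a\<in>I1. \<forall>b\<in>I2. h b < h a" and bh: "bij h"
    using rt unfolding rotation_type_def by blast
  have hinj: "inj h" using bh bij_is_inj by auto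
  have bg: "bij g" using pos unfolding positive_def systemic_def by blast
  have ig: "inj g" using bg bij_is_inj by auto
  have posl: "g p < g q" if "fst p = fst q" "p < q" for p q
    using pos that unfolding positive_def ll by blast
  have fstg: "fst (g p) = h (fst p)" for p
  proof -
    have "p \<in> vertical (fst p)" by (cases p) (simp add: vertical_def)
    then have "g p \<in> vertical (h (fst p))" using ini unfolding initiates_def by blast
    then show ?thesis by (auto simp: vertical_def)
  qed
  have I2c: "x \<in> I2 \<longleftrightarrow> x \<notin> I1" for x using sec unfolding is_section_def by blast
  have lt12: "x < y" if "x \<in> I1" "y \<notin> I1" for x y using sec that I2c unfolding is_section_def by blast
  have ordh: "h x < h y \<longleftrightarrow> (x\<notin>I1 \<and> y\<in>I1) \<or> ((x\<in>I1 \<longleftrightarrow> y\<in>I1) \<and> x<y)" for x y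
  proof (cases "x \<in> I1"; cases "y \<in> I1")
    assume a: "x \<in> I1" "y \<in> I1"
    show ?thesis
    proof (cases x y rule: linorder_cases)
      case less then show ?thesis using a m1 by (auto dest: strict_mono_onD)
    next
      case equal then show ?thesis by simp
    next
      case greater then have "h y < h x" using a m1 by (auto dest: strict_mono_onD)
      then show ?thesis using a greater by auto
    qed
  next
    assume a: "x \<notin> I1" "y \<notin> I1"
    then have a2: "x \<in> I2" "y \<in> I2" using I2c by auto
    show ?thesis
    proof (cases x y rule: linorder_cases)
      case less then show ?thesis using a a2 m2 by (auto dest: strict_mono_onD)
    next
      case equal then show ?thesis by simp
    next
      case greater then have "h y < h x" using a2 m2 by (auto dest: strict_mono_onD)
      then show ?thesis using a greater by auto
    qed
  next
    assume a: "x \<in> I1" "y \<notin> I1"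
    then have "h y < h x" using cr I2c by blast
    then show ?thesis using a by auto
  next
    assume a: "x \<notin> I1" "y \<in> I1"
    then have "h x < h y" using cr I2c by blast
    then show ?thesis using a by auto
  qed
  define A where "A = {p::pt. fst p \<in> I1}"
  have dc: "y \<in> A" if "x \<in> A" "y < x" for x y
  proof (rule ccontr)
    assume "y \<notin> A"
    then have "fst x < fst y" using lt12 that unfolding A_def by auto
    then show False using that(2) by (simp add: less_prod_def)
  qed
  have key: "g p < g q \<longleftrightarrow> (p\<notin>A \<and> q\<in>A) \<or> ((p\<in>A \<longleftrightarrow> q\<in>A) \<and> p<q)" for p q
  proof (cases "fst p = fst q")
    case True
    then have same: "p\<in>A \<longleftrightarrow> q\<in>A" unfolding A_def by simp
    have "g p < g q \<longleftrightarrow> p < q"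
    proof
      assume "p < q" then show "g p < g q" using posl True by blast
    next
      assume gl: "g p < g q"
      show "p < q"
      proof (rule ccontr)
        assume "\<not> p < q"
        then have "p = q \<or> q < p" by auto
        then have "g p = g q \<or> g q < g p" using posl[of q p] True by auto
        then show False using gl by auto
      qed
    qed
    then show ?thesis using same by auto
  next
    case False
    then have hn: "h (fst p) \<noteq> h (fst q)" by (simp add: inj_eq[OF hinj])
    have "g p < g q \<longleftrightarrow> h (fst p) < h (fst q)"
      using fst_less[of "g p" "g q"] hn by (simp add: fstg)
    also have "\<dots> \<longleftrightarrow> (p\<notin>A \<and> q\<in>A) \<or> ((p\<in>A \<longleftrightarrow> q\<in>A) \<and> p<q)"
      unfolding ordh A_def using fst_less[OF False] by simp
    finally show ?thesis .
  qed
  have "CC (g a) (g b) (g c) = CC a b c"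
    unfolding CC_def[of "g a"] key using rotC[of A a b c] dc by blast
  then show ?thesis by simp
qed

lemma part4:
  fixes g :: "pt \<Rightarrow> pt"
  assumes pos: "positive g" and gS: "g \<in> Gamma4 relS"
  shows "CC a b c \<longleftrightarrow> CC (g a) (g b) (g c)"
proof -
  have bg: "bij g" using pos unfolding positive_def systemic_def by blast
  have ig: "inj g" using bg bij_is_inj by auto
  have posl: "g p < g q" if "fst p = fst q" "p < q" for p q
    using pos that unfolding positive_def ll by blast
  have Sp: "relS a b c d \<longleftrightarrow> relS (g a) (g b) (g c) (g d)" for a b c d
    using gS unfolding Gamma4_def by blast
  define E where "E a b c = (CC a b c = CC (g a) (g b) (g c))" for a b c
  have Emid: "E a b c = E a d c" if "distinct [a,b,c,d]" for a b c d
  proof -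
    have dg: "distinct [g a, g b, g c, g d]" using that by (simp add: inj_eq[OF ig])
    have "(CC a b c \<noteq> CC a d c) = (CC (g a) (g b) (g c) \<noteq> CC (g a) (g d) (g c))"
      using Sp[of a b c d] that dg unfolding relS_iff by simp
    then show ?thesis unfolding E_def by blast
  qed
  have Ecyc: "E a b c = E b c a" for a b c unfolding E_def CC_def by blast
  have E3: "E a b c = E a b d" if "distinct [a,b,c,d]" for a b c d
  proof -
    have "E a b c = E b c a" by (rule Ecyc)
    also have "\<dots> = E b d a" using Emid[of b c a d] that by auto
    also have "\<dots> = E a b d" using Ecyc[of a b d] by simp
    finally show ?thesis .
  qed
  have E1: "E a b c = E d b c" if "distinct [a,b,c,d]" for a b c d
  proof -
    have "E a b c = E c a b" using Ecyc[of c a b] by simp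
    also have "\<dots> = E c d b" using Emid[of c a b d] that by auto
    also have "\<dots> = E d b c" using Ecyc[of c d b] by simp
    finally show ?thesis .
  qed
  show ?thesis
  proof (cases "distinct [a,b,c]")
    case False
    then have "\<not> distinct [g a, g b, g c]" by (simp add: inj_eq[OF ig])
    with False show ?thesis unfolding CC_def by auto
  next
    case True
    define t where "t = max (fst a) (max (fst b) (fst c)) + 1"
    define p where "p = (t, 0::int)"
    define q where "q = (t, 1::int)"
    define r where "r = (t, 2::int)"
    have fa: "fst a \<noteq> t" "fst b \<noteq> t" "fst c \<noteq> t" unfolding t_def by auto
    have nq: "x \<noteq> p" "x \<noteq> q" "x \<noteq> r" if "fst x \<noteq> t" for x
      using that unfolding p_def q_def r_def by auto
    have pqr: "p < q" "q < r" "p \<noteq> r" unfolding p_def q_def r_def by auto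
    have "E p q r"
    proof -
      have "CC p q r" using pqr unfolding CC_def by simp
      moreover have "CC (g p) (g q) (g r)" using posl[of p q] posl[of q r] pqr
        unfolding CC_def p_def q_def r_def by simp
      ultimately show ?thesis unfolding E_def by simp
    qed
    moreover have "E a b c = E a b r" using E3[of a b c r] True nq fa by auto
    moreover have "E a b r = E a q r" using Emid[of a b r q] True nq fa pqr by auto
    moreover have "E a q r = E p q r" using E1[of a q r p] True nq fa pqr by auto
    ultimately show ?thesis unfolding E_def by simp
  qed
qed

theorem mainTheorem12:
  shows "Gamma3 relC = {g. positive g \<and> g \<in> Gamma4 relS}
       \<and> Gamma3 relC = {g. positive g \<and> (\<exists>h. initiates g h \<and> rotation_type h)}"
proof -
  have G3: "Gamma3 relC = {g. bij g \<and> (\<forall>a b c. CC a b c \<longleftrightarrow> CC (g a) (g b) (g c))}"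
    unfolding Gamma3_def relC_CC ..
  have bp: "bij g" if "positive g" for g using that unfolding positive_def systemic_def by blast
  have A: "Gamma3 relC = {g. positive g \<and> (\<exists>h. initiates g h \<and> rotation_type h)}"
  proof
    show "Gamma3 relC \<subseteq> {g. positive g \<and> (\<exists>h. initiates g h \<and> rotation_type h)}"
      unfolding G3 using part1 by blast
    show "{g. positive g \<and> (\<exists>h. initiates g h \<and> rotation_type h)} \<subseteq> Gamma3 relC"
      unfolding G3 using part2 bp by blast
  qed
  have B: "Gamma3 relC = {g. positive g \<and> g \<in> Gamma4 relS}"
  proof
    show "Gamma3 relC \<subseteq> {g. positive g \<and> g \<in> Gamma4 relS}"
    proof
      fix g assume g: "g \<in> Gamma3 relC"
      then have "positive g" using A by blast
      moreover have "g \<in> Gamma4 relS"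
      proof -
        have bg: "bij g" and pr: "\<And>a b c. CC a b c \<longleftrightarrow> CC (g a) (g b) (g c)" using g unfolding G3 by auto
        have ig: "inj g" using bg bij_is_inj by auto
        have "relS a b c d \<longleftrightarrow> relS (g a) (g b) (g c) (g d)" for a b c d
          unfolding relS_iff using pr[of a b c] pr[of a d c] by (simp add: inj_eq[OF ig])
        then show ?thesis using bg unfolding Gamma4_def by blast
      qed
      ultimately show "g \<in> {g. positive g \<and> g \<in> Gamma4 relS}" by blast
    qed
    show "{g. positive g \<and> g \<in> Gamma4 relS} \<subseteq> Gamma3 relC"
      unfolding G3 using part4 bp by blast
  qed
  show ?thesis using A B by blast
qed

end
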